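(* Let $\Omega\subset\mathbb R^d$ be a bounded open set, $L>0$, $n\in\mathbb Z_+$, $X=\overline\Omega\times[-L,L]^n$, and let $\Gamma:\mathcal P(X)\times X\to X$ satisfy: (i) if $\mu_j\to\mu$ in $\mathcal P(X)$ then $\sup_{(x,y)\in X}|\Gamma(\mu_j,(x,y))-\Gamma(\mu,(x,y))|\to0$; (ii) there is $C_0>0$ such that $\sup_{\mu\in\mathcal P(X)}|\Gamma(\mu,(x_1,y_1))-\Gamma(\mu,(x_2,y_2))|\le C_0(|x_1-x_2|+|y_1-y_2|)$ for all $(x_1,y_1),(x_2,y_2)\in X$. Then $G:\mathcal P(X)\to\mathcal P(X)$, $G(\mu)=\Gamma(\mu,\cdot)_\#\mu$, is continuous.
   Context: $\mathcal P(X)$: Borel probability measures on $X$ with the 1-Wasserstein metric $W_1$; $F_\#$ denotes pushforward. *)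

theory Defs
  imports "HOL-Probability.Probability"
begin

definition Prob_on :: "'a::metric_space set \<Rightarrow> 'a measure set" where
  "Prob_on X = {M. sets M = sets (restrict_space borel X) \<and> prob_space M}"

definition couplings :: "'a::metric_space set \<Rightarrow> 'a measure \<Rightarrow> 'a measure \<Rightarrow> ('a \<times> 'a) measure set" where
  "couplings X \<mu> \<nu> = {\<pi>. sets \<pi> = sets (restrict_space borel X \<Otimes>\<^sub>M restrict_space borel X)
       \<and> prob_space \<pi>
       \<and> distr \<pi> (restrict_space borel X) fst = \<mu>
       \<and> distr \<pi> (restrict_space borel X) snd = \<nu>}"

definition W1 :: "'a::metric_space set \<Rightarrow> 'a measure \<Rightarrow> 'a measure \<Rightarrow> ennreal" where
  "W1 X \<mu> \<nu> = (INF \<pi>\<in>couplings X \<mu> \<nu>. \<integral>\<^sup>+ p. ennreal (dist (fst p) (snd p)) \<partial>\<pi>)"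

end

theory Submission
  imports Defs
begin

lemma boundedX:
  fixes \<Omega> :: "(real^'d) set" and L :: real
  assumes "bounded \<Omega>"
  shows "bounded (closure \<Omega> \<times> {y::real^'n. \<forall>i. \<bar>y $ i\<bar> \<le> L})"
proof -
  have "bounded {y::real^'n. \<forall>i. \<bar>y $ i\<bar> \<le> L}"
    unfolding bounded_iff
  proof (intro exI ballI)
    fix y :: "real^'n" assume "y \<in> {y. \<forall>i. \<bar>y $ i\<bar> \<le> L}"
    hence "\<forall>i. \<bar>y $ i\<bar> \<le> L" by simp
    have "norm y \<le> (\<Sum>i\<in>UNIV. \<bar>y $ i\<bar>)" by (rule norm_le_l1_cart)
    also have "\<dots> \<le> (\<Sum>i\<in>(UNIV::'n set). L)" by (rule sum_mono) (use \<open>\<forall>i. \<bar>y $ i\<bar> \<le> L\<close> in auto)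
    finally show "norm y \<le> real CARD('n) * L" by simp
  qed
  thus ?thesis using assms by (intro bounded_Times bounded_closure)
qed

lemma bounded_dist_bound:
  fixes S :: "'a::real_normed_vector set"
  assumes "bounded S"
  shows "\<exists>B. \<forall>x\<in>S. \<forall>y\<in>S. dist x y \<le> B"
proof -
  obtain a where a: "\<forall>x\<in>S. norm x \<le> a" using assms unfolding bounded_iff by blast
  show ?thesis
  proof (intro exI ballI)
    fix x y assume "x \<in> S" "y \<in> S"
    have "dist x y \<le> norm x + norm y" by (simp add: dist_norm norm_triangle_ineq4)
    moreover have "norm x \<le> a" "norm y \<le> a" using a \<open>x \<in> S\<close> \<open>y \<in> S\<close> by auto
    ultimately show "dist x y \<le> 2 * a" by linarith
  qed
qed

theorem corollaryD4:
  fixes \<Omega> :: "(real^'d) set" and L :: real and X :: "((real^'d) \<times> (real^'n)) set"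
    and \<Gamma> :: "((real^'d) \<times> (real^'n)) measure \<Rightarrow> ((real^'d) \<times> (real^'n)) \<Rightarrow> ((real^'d) \<times> (real^'n))"
  assumes "open \<Omega>" and "bounded \<Omega>" and "L > 0"
    and X_def: "X = closure \<Omega> \<times> {y. \<forall>i. \<bar>y $ i\<bar> \<le> L}"
    and \<Gamma>_into: "\<And>\<mu> p. \<mu> \<in> Prob_on X \<Longrightarrow> p \<in> X \<Longrightarrow> \<Gamma> \<mu> p \<in> X"
    and \<Gamma>_cont: "\<And>\<mu>s \<mu>. (\<forall>j. \<mu>s j \<in> Prob_on X) \<Longrightarrow> \<mu> \<in> Prob_on X \<Longrightarrow>
         ((\<lambda>j. W1 X (\<mu>s j) \<mu>) \<longlonglongrightarrow> 0) \<Longrightarrow>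
         ((\<lambda>j. SUP p\<in>X. dist (\<Gamma> (\<mu>s j) p) (\<Gamma> \<mu> p)) \<longlonglongrightarrow> 0)"
    and \<Gamma>_lip: "\<exists>C0>0. \<forall>x1 y1 x2 y2. (x1, y1) \<in> X \<longrightarrow> (x2, y2) \<in> X \<longrightarrow>
         (SUP \<mu>\<in>Prob_on X. dist (\<Gamma> \<mu> (x1, y1)) (\<Gamma> \<mu> (x2, y2)))
           \<le> C0 * (dist x1 x2 + dist y1 y2)"
  shows "\<forall>\<mu>\<in>Prob_on X. \<forall>\<epsilon>>0. \<exists>\<delta>>0. \<forall>\<nu>\<in>Prob_on X.
           W1 X \<nu> \<mu> < ennreal \<delta> \<longrightarrow>
           W1 X (distr \<nu> (restrict_space borel X) (\<Gamma> \<nu>))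
                (distr \<mu> (restrict_space borel X) (\<Gamma> \<mu>)) < ennreal \<epsilon>"
proof -
  have bX: "bounded X" unfolding X_def by (rule boundedX[OF assms(2)])
  obtain B where B0: "\<forall>x\<in>X. \<forall>y\<in>X. dist x y \<le> B"
    using bounded_dist_bound[OF bX] by blast
  have B: "\<And>x y. x \<in> X \<Longrightarrow> y \<in> X \<Longrightarrow> dist x y \<le> B" using B0 by blast
  obtain C0 where C0: "C0 > 0" and C0l: "\<And>x1 y1 x2 y2. (x1, y1) \<in> X \<Longrightarrow> (x2, y2) \<in> X \<Longrightarrow>
         (SUP \<mu>\<in>Prob_on X. dist (\<Gamma> \<mu> (x1, y1)) (\<Gamma> \<mu> (x2, y2)))
           \<le> C0 * (dist x1 x2 + dist y1 y2)" using \<Gamma>_lip by blast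
  define K where "K = 2 * C0"
  have Kpos: "K > 0" using C0 unfolding K_def by simp
  have lip: "dist (\<Gamma> \<mu> p) (\<Gamma> \<mu> q) \<le> K * dist p q"
    if \<mu>: "\<mu> \<in> Prob_on X" and p: "p \<in> X" and q: "q \<in> X" for \<mu> p q
  proof -
    obtain x1 y1 where p1: "p = (x1, y1)" by (cases p)
    obtain x2 y2 where q1: "q = (x2, y2)" by (cases q)
    have bdd: "bdd_above ((\<lambda>\<mu>. dist (\<Gamma> \<mu> (x1, y1)) (\<Gamma> \<mu> (x2, y2))) ` Prob_on X)"
      by (rule bdd_aboveI2[where M=B]) (use B \<Gamma>_into p q p1 q1 in auto)
    have "dist (\<Gamma> \<mu> p) (\<Gamma> \<mu> q) \<le> (SUP \<mu>\<in>Prob_on X. dist (\<Gamma> \<mu> (x1, y1)) (\<Gamma> \<mu> (x2, y2)))"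
      unfolding p1 q1 by (rule cSUP_upper[OF \<mu> bdd])
    also have "\<dots> \<le> C0 * (dist x1 x2 + dist y1 y2)" using C0l p q p1 q1 by blast
    also have "\<dots> \<le> C0 * (2 * dist p q)"
    proof -
      have "dist x1 x2 \<le> dist p q" unfolding p1 q1 by (simp add: dist_fst_le[of "(x1,y1)" "(x2,y2)", simplified])
      moreover have "dist y1 y2 \<le> dist p q" unfolding p1 q1 by (simp add: dist_snd_le[of "(x1,y1)" "(x2,y2)", simplified])
      ultimately show ?thesis using C0 by (intro mult_left_mono) auto
    qed
    finally show ?thesis unfolding K_def by simp
  qed
  have meas: "\<Gamma> \<mu> \<in> restrict_space borel X \<rightarrow>\<^sub>M restrict_space borel X" if \<mu>: "\<mu> \<in> Prob_on X" for \<mu>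
  proof (rule measurable_restrict_space2)
    show "\<Gamma> \<mu> \<in> space (restrict_space borel X) \<rightarrow> X" using \<Gamma>_into \<mu> by (auto simp: space_restrict_space)
    have "K-lipschitz_on X (\<Gamma> \<mu>)" using lip[OF \<mu>] Kpos by (intro lipschitz_onI) auto
    hence "continuous_on X (\<Gamma> \<mu>)" by (rule lipschitz_on_continuous_on)
    thus "\<Gamma> \<mu> \<in> borel_measurable (restrict_space borel X)"
      by (rule borel_measurable_continuous_on_restrict)
  qed

  let ?RX = "restrict_space borel X"
  have spRX: "space ?RX = X" by (simp add: space_restrict_space)
  have idm: "(\<lambda>x. x) \<in> ?RX \<rightarrow>\<^sub>M borel" by (intro measurable_restrict_space1) simp
  have fb: "fst \<in> ?RX \<Otimes>\<^sub>M ?RX \<rightarrow>\<^sub>M borel"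
    using measurable_compose[OF measurable_fst idm, of ?RX] by simp
  have sb: "snd \<in> ?RX \<Otimes>\<^sub>M ?RX \<rightarrow>\<^sub>M borel"
    using measurable_compose[OF measurable_snd idm, of ?RX] by simp
  have dm: "(\<lambda>p. dist (fst p) (snd p)) \<in> borel_measurable (?RX \<Otimes>\<^sub>M ?RX)"
    by (rule borel_measurable_dist[OF fb sb])
  have dme: "(\<lambda>p. ennreal (dist (fst p) (snd p))) \<in> borel_measurable (?RX \<Otimes>\<^sub>M ?RX)"
    using dm by measurable
  show ?thesis
  proof (intro ballI allI impI)
    fix \<mu> and \<epsilon> :: real assume \<mu>: "\<mu> \<in> Prob_on X" and \<epsilon>: "\<epsilon> > 0"
    define S where "S \<nu> = (SUP p\<in>X. dist (\<Gamma> \<nu> p) (\<Gamma> \<mu> p))" for \<nu>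
    have Sub: "dist (\<Gamma> \<nu> p) (\<Gamma> \<mu> p) \<le> S \<nu>" if \<nu>: "\<nu> \<in> Prob_on X" and p: "p \<in> X" for \<nu> p
    proof -
      have bdd: "bdd_above ((\<lambda>p. dist (\<Gamma> \<nu> p) (\<Gamma> \<mu> p)) ` X)"
        by (rule bdd_aboveI2[where M=B]) (use B \<Gamma>_into \<nu> \<mu> in auto)
      show ?thesis unfolding S_def by (rule cSUP_upper[OF p bdd])
    qed
    have claim: "\<exists>\<delta>>0. \<forall>\<nu>\<in>Prob_on X. W1 X \<nu> \<mu> < ennreal \<delta> \<longrightarrow> S \<nu> < \<epsilon>/2"
    proof (rule ccontr)
      assume "\<not> ?thesis"
      hence "\<forall>\<delta>>0. \<exists>\<nu>. \<nu> \<in> Prob_on X \<and> W1 X \<nu> \<mu> < ennreal \<delta> \<and> \<not> S \<nu> < \<epsilon>/2" by auto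
      hence "\<forall>j::nat. \<exists>\<nu>. \<nu> \<in> Prob_on X \<and> W1 X \<nu> \<mu> < ennreal (inverse (real (Suc j))) \<and> \<not> S \<nu> < \<epsilon>/2"
        by simp
      hence "\<exists>\<nu>s. \<forall>j::nat. \<nu>s j \<in> Prob_on X \<and> W1 X (\<nu>s j) \<mu> < ennreal (inverse (real (Suc j))) \<and> \<not> S (\<nu>s j) < \<epsilon>/2"
        by (rule choice)
      then obtain \<nu>s where \<nu>s: "\<And>j. \<nu>s j \<in> Prob_on X" "\<And>j. W1 X (\<nu>s j) \<mu> < ennreal (inverse (real (Suc j)))"
         "\<And>j. \<not> S (\<nu>s j) < \<epsilon>/2" by blast
      have "(\<lambda>j. W1 X (\<nu>s j) \<mu>) \<longlonglongrightarrow> 0"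
      proof (rule tendsto_sandwich[of "\<lambda>_. 0" _ _ "\<lambda>j. ennreal (inverse (real (Suc j)))"])
        show "\<forall>\<^sub>F n in sequentially. 0 \<le> W1 X (\<nu>s n) \<mu>" by simp
        show "\<forall>\<^sub>F n in sequentially. W1 X (\<nu>s n) \<mu> \<le> ennreal (inverse (real (Suc n)))"
          using \<nu>s(2) by (intro always_eventually allI less_imp_le)
        show "(\<lambda>_. 0::ennreal) \<longlonglongrightarrow> 0" by simp
        have "(\<lambda>j. ennreal (inverse (real (Suc j)))) \<longlonglongrightarrow> ennreal 0"
          by (rule tendsto_ennrealI[OF LIMSEQ_inverse_real_of_nat])
        thus "(\<lambda>j. ennreal (inverse (real (Suc j)))) \<longlonglongrightarrow> 0" by simp
      qed
      hence "(\<lambda>j. S (\<nu>s j)) \<longlonglongrightarrow> 0" unfolding S_def using \<Gamma>_cont \<nu>s(1) \<mu> by blast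
      hence "eventually (\<lambda>j. S (\<nu>s j) < \<epsilon>/2) sequentially" using \<epsilon> by (intro order_tendstoD) auto
      then obtain N where "\<And>j. j \<ge> N \<Longrightarrow> S (\<nu>s j) < \<epsilon>/2" unfolding eventually_sequentially by blast
      with \<nu>s(3)[of N] show False by blast
    qed
    then obtain \<delta>1 where \<delta>1: "\<delta>1 > 0" "\<And>\<nu>. \<nu> \<in> Prob_on X \<Longrightarrow> W1 X \<nu> \<mu> < ennreal \<delta>1 \<Longrightarrow> S \<nu> < \<epsilon>/2"
      by blast
    define \<delta> where "\<delta> = min \<delta>1 (\<epsilon> / (2 * K))"
    have \<delta>pos: "\<delta> > 0" unfolding \<delta>_def using \<delta>1 \<epsilon> Kpos by simp
    show "\<exists>\<delta>>0. \<forall>\<nu>\<in>Prob_on X. W1 X \<nu> \<mu> < ennreal \<delta> \<longrightarrow>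
           W1 X (distr \<nu> ?RX (\<Gamma> \<nu>)) (distr \<mu> ?RX (\<Gamma> \<mu>)) < ennreal \<epsilon>"
    proof (intro exI[of _ \<delta>] conjI ballI impI \<delta>pos)
      fix \<nu> assume \<nu>: "\<nu> \<in> Prob_on X" and W: "W1 X \<nu> \<mu> < ennreal \<delta>"
      have W1': "W1 X \<nu> \<mu> < ennreal \<delta>1"
        using W \<delta>1 unfolding \<delta>_def by (meson ennreal_leI less_le_trans min.cobounded1)
      have S\<nu>: "S \<nu> < \<epsilon>/2" using \<delta>1(2)[OF \<nu> W1'] .
      have "sets \<nu> = sets ?RX" using \<nu> unfolding Prob_on_def by blast
      hence "space \<nu> = space ?RX" by (rule sets_eq_imp_space_eq)
      hence "space \<nu> = X" using spRX by simp
      moreover have "space \<nu> \<noteq> {}" using \<nu> unfolding Prob_on_def by (auto dest: prob_space.not_empty)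
      ultimately obtain p0 where "p0 \<in> X" by auto
      hence S0: "S \<nu> \<ge> 0" using Sub[OF \<nu>] by (meson zero_le_dist order_trans)
      from W obtain \<pi> where \<pi>: "\<pi> \<in> couplings X \<nu> \<mu>"
        and \<pi>I: "(\<integral>\<^sup>+ p. ennreal (dist (fst p) (snd p)) \<partial>\<pi>) < ennreal \<delta>"
        unfolding W1_def INF_less_iff by blast
      have s\<pi>: "sets \<pi> = sets (?RX \<Otimes>\<^sub>M ?RX)" and p\<pi>: "prob_space \<pi>"
        and m1: "distr \<pi> ?RX fst = \<nu>" and m2: "distr \<pi> ?RX snd = \<mu>"
        using \<pi> unfolding couplings_def by auto
      have sp\<pi>: "space \<pi> = X \<times> X" using sets_eq_imp_space_eq[OF s\<pi>]
        by (simp add: space_pair_measure space_restrict_space)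
      have fstm: "fst \<in> \<pi> \<rightarrow>\<^sub>M ?RX"
        by (subst measurable_cong_sets[OF s\<pi> refl]) (rule measurable_fst)
      have sndm: "snd \<in> \<pi> \<rightarrow>\<^sub>M ?RX"
        by (subst measurable_cong_sets[OF s\<pi> refl]) (rule measurable_snd)
      have dm\<pi>: "(\<lambda>p. ennreal (dist (fst p) (snd p))) \<in> borel_measurable \<pi>"
        by (subst measurable_cong_sets[OF s\<pi> refl]) (rule dme)
      define f where "f = (\<lambda>x. (\<Gamma> \<nu> (fst x), \<Gamma> \<mu> (snd x)))"
      have fm: "f \<in> \<pi> \<rightarrow>\<^sub>M ?RX \<Otimes>\<^sub>M ?RX" unfolding f_def
        by (intro measurable_Pair measurable_compose[OF fstm meas[OF \<nu>]] measurable_compose[OF sndm meas[OF \<mu>]])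
      define \<pi>' where "\<pi>' = distr \<pi> (?RX \<Otimes>\<^sub>M ?RX) f"
      have "\<pi>' \<in> couplings X (distr \<nu> ?RX (\<Gamma> \<nu>)) (distr \<mu> ?RX (\<Gamma> \<mu>))"
        unfolding couplings_def mem_Collect_eq
      proof (intro conjI)
        show "sets \<pi>' = sets (?RX \<Otimes>\<^sub>M ?RX)" unfolding \<pi>'_def by simp
        show "prob_space \<pi>'" unfolding \<pi>'_def by (rule prob_space.prob_space_distr[OF p\<pi> fm])
        have "distr \<pi>' ?RX fst = distr \<pi> ?RX (fst \<circ> f)"
          unfolding \<pi>'_def by (rule distr_distr[OF measurable_fst fm])
        also have "fst \<circ> f = \<Gamma> \<nu> \<circ> fst" unfolding f_def by auto
        also have "distr \<pi> ?RX (\<Gamma> \<nu> \<circ> fst) = distr (distr \<pi> ?RX fst) ?RX (\<Gamma> \<nu>)"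
          by (rule distr_distr[OF meas[OF \<nu>] fstm, symmetric])
        finally show "distr \<pi>' ?RX fst = distr \<nu> ?RX (\<Gamma> \<nu>)" using m1 by simp
        have "distr \<pi>' ?RX snd = distr \<pi> ?RX (snd \<circ> f)"
          unfolding \<pi>'_def by (rule distr_distr[OF measurable_snd fm])
        also have "snd \<circ> f = \<Gamma> \<mu> \<circ> snd" unfolding f_def by auto
        also have "distr \<pi> ?RX (\<Gamma> \<mu> \<circ> snd) = distr (distr \<pi> ?RX snd) ?RX (\<Gamma> \<mu>)"
          by (rule distr_distr[OF meas[OF \<mu>] sndm, symmetric])
        finally show "distr \<pi>' ?RX snd = distr \<mu> ?RX (\<Gamma> \<mu>)" using m2 by simp
      qed
      hence "W1 X (distr \<nu> ?RX (\<Gamma> \<nu>)) (distr \<mu> ?RX (\<Gamma> \<mu>))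
             \<le> (\<integral>\<^sup>+ p. ennreal (dist (fst p) (snd p)) \<partial>\<pi>')"
        unfolding W1_def by (rule INF_lower)
      also have "\<dots> = (\<integral>\<^sup>+ x. ennreal (dist (fst (f x)) (snd (f x))) \<partial>\<pi>)"
        unfolding \<pi>'_def by (rule nn_integral_distr[OF fm]) (use dme in simp)
      also have "\<dots> \<le> (\<integral>\<^sup>+ x. (ennreal (S \<nu>) + ennreal K * ennreal (dist (fst x) (snd x))) \<partial>\<pi>)"
      proof (rule nn_integral_mono)
        fix x assume "x \<in> space \<pi>"
        hence a: "fst x \<in> X" and b: "snd x \<in> X" using sp\<pi> by (auto simp: mem_Times_iff)
        have "dist (\<Gamma> \<nu> (fst x)) (\<Gamma> \<mu> (snd x)) \<le> dist (\<Gamma> \<nu> (fst x)) (\<Gamma> \<mu> (fst x)) + dist (\<Gamma> \<mu> (fst x)) (\<Gamma> \<mu> (snd x))"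
          by (rule dist_triangle)
        also have "\<dots> \<le> S \<nu> + K * dist (fst x) (snd x)"
          using Sub[OF \<nu> a] lip[OF \<mu> a b] by linarith
        finally have "ennreal (dist (\<Gamma> \<nu> (fst x)) (\<Gamma> \<mu> (snd x))) \<le> ennreal (S \<nu> + K * dist (fst x) (snd x))"
          by (rule ennreal_leI)
        also have "\<dots> = ennreal (S \<nu>) + ennreal K * ennreal (dist (fst x) (snd x))"
          using S0 Kpos by (simp add: ennreal_plus ennreal_mult)
        finally show "ennreal (dist (fst (f x)) (snd (f x))) \<le> ennreal (S \<nu>) + ennreal K * ennreal (dist (fst x) (snd x))"
          unfolding f_def by simp
      qed
      also have "\<dots> = ennreal (S \<nu>) + ennreal K * (\<integral>\<^sup>+ x. ennreal (dist (fst x) (snd x)) \<partial>\<pi>)"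
        using dm\<pi> by (simp add: nn_integral_add nn_integral_cmult prob_space.emeasure_space_1[OF p\<pi>])
      finally have le: "W1 X (distr \<nu> ?RX (\<Gamma> \<nu>)) (distr \<mu> ?RX (\<Gamma> \<mu>))
           \<le> ennreal (S \<nu>) + ennreal K * (\<integral>\<^sup>+ x. ennreal (dist (fst x) (snd x)) \<partial>\<pi>)" .
      obtain r where r: "r \<ge> 0" "(\<integral>\<^sup>+ x. ennreal (dist (fst x) (snd x)) \<partial>\<pi>) = ennreal r"
        using \<pi>I by (cases "(\<integral>\<^sup>+ x. ennreal (dist (fst x) (snd x)) \<partial>\<pi>)") auto
      have r\<delta>: "r < \<delta>" using \<pi>I r \<delta>pos by (simp add: ennreal_less_iff)
      have "K * r < K * \<delta>" using r\<delta> Kpos by simp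
      also have "K * \<delta> \<le> K * (\<epsilon> / (2 * K))" unfolding \<delta>_def using Kpos by (intro mult_left_mono) auto
      also have "\<dots> = \<epsilon>/2" using Kpos by simp
      finally have Kr: "K * r < \<epsilon>/2" .
      have "ennreal (S \<nu>) + ennreal K * (\<integral>\<^sup>+ x. ennreal (dist (fst x) (snd x)) \<partial>\<pi>) = ennreal (S \<nu> + K * r)"
        using r S0 Kpos by (simp add: ennreal_plus ennreal_mult)
      also have "\<dots> < ennreal \<epsilon>" using S\<nu> Kr \<epsilon> by (intro ennreal_lessI) auto
      finally show "W1 X (distr \<nu> ?RX (\<Gamma> \<nu>)) (distr \<mu> ?RX (\<Gamma> \<mu>)) < ennreal \<epsilon>" using le by simp
    qed
  qed
qed

end
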